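(* Assume the Continuum Hypothesis. Let $G$ be an uncountable abelian Polish group. Then there exists a set $X\subseteq G$ such that both $X$ and $G\setminus X$ are naively Haar meager. In particular, the naively Haar meager subsets of $G$ do not form an ideal.
   Context: Let $G$ be a Polish group. A set $X\subseteq G$ is called naively Haar meager if there are a compact metrizable space $K$ and a continuous map $f\colon K\to G$ such that $f^{-1}(gXh)$ is meager in $K$ for every $g,h\in G$. *)

theory Defs
  imports "HOL-Analysis.Analysis" "HOL-Library.Equipollence"
begin

definition continuum_hypothesis :: bool where
  "continuum_hypothesis \<longleftrightarrow> (\<forall>A :: real set. countable A \<or> A \<approx> (UNIV :: real set))"

definition nowhere_dense_in :: "'a topology \<Rightarrow> 'a set \<Rightarrow> bool" where
  "nowhere_dense_in T S \<longleftrightarrow> S \<subseteq> topspace T \<and> T interior_of (T closure_of S) = {}"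

definition meager_in :: "'a topology \<Rightarrow> 'a set \<Rightarrow> bool" where
  "meager_in T S \<longleftrightarrow>
     (\<exists>F :: nat \<Rightarrow> 'a set. (\<forall>n. nowhere_dense_in T (F n)) \<and> S \<subseteq> (\<Union>n. F n))"

text \<open>Every compact metrizable space
  has cardinality at most the continuum, hence is homeomorphic to a space whose
  carrier is a subset of the reals; so quantifying over abstract topologies on
  type real covers all compact metrizable spaces up to homeomorphism.  The compact
  space is required to be nonempty (with the empty space every set would trivially
  qualify, contradicting the paper's claim that the family is not an ideal).\<close>
definition naively_haar_meager :: "'g :: {polish_space, topological_ab_group_add} set \<Rightarrow> bool" where
  "naively_haar_meager X \<longleftrightarrow>
     (\<exists>(K :: real topology) (f :: real \<Rightarrow> 'g).
        topspace K \<noteq> {} \<and> compact_space K \<and> metrizable_space K \<and>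
        continuous_map K euclidean f \<and>
        (\<forall>g h. meager_in K {k \<in> topspace K. f k \<in> {g + x + h | x. x \<in> X}}))"

end

theory Submission
  imports Defs
begin


lemma nowhere_dense_empty: "nowhere_dense_in K {}"
  unfolding nowhere_dense_in_def by simp

lemma meager_countable_union:
  assumes "countable I" "\<And>i. i \<in> I \<Longrightarrow> meager_in K (S i)"
  shows "meager_in K (\<Union>i\<in>I. S i)"
proof -
  have "\<forall>i\<in>I. \<exists>F::nat \<Rightarrow> _. (\<forall>n. nowhere_dense_in K (F n)) \<and> S i \<subseteq> (\<Union>n. F n)"
  proof
    fix i assume "i \<in> I"
    then have "meager_in K (S i)" by (rule assms(2))
    then show "\<exists>F::nat \<Rightarrow> _. (\<forall>n. nowhere_dense_in K (F n)) \<and> S i \<subseteq> (\<Union>n. F n)"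
      unfolding meager_in_def .
  qed
  from bchoice[OF this] obtain F :: "_ \<Rightarrow> nat \<Rightarrow> _" where F': "\<forall>i\<in>I. (\<forall>n. nowhere_dense_in K (F i n)) \<and> S i \<subseteq> (\<Union>n. F i n)"
    by blast
  show ?thesis
  proof (cases "I = {}")
    case True
    have "\<forall>n. nowhere_dense_in K ((\<lambda>n. {}) n)" by (simp add: nowhere_dense_empty)
    moreover have "(\<Union>i\<in>I. S i) \<subseteq> (\<Union>n. (\<lambda>n. {}) n)" using True by simp
    ultimately show ?thesis unfolding meager_in_def by (intro exI[of _ "\<lambda>n. {}"] conjI)
  next
    case False
    define G where "G n = F (from_nat_into I (fst (prod_decode n))) (snd (prod_decode n))" for n
    have "\<forall>n. nowhere_dense_in K (G n)"
    proof
      fix n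
      have "from_nat_into I (fst (prod_decode n)) \<in> I" using False by (rule from_nat_into)
      then show "nowhere_dense_in K (G n)" using F' unfolding G_def by blast
    qed
    moreover have "(\<Union>i\<in>I. S i) \<subseteq> (\<Union>n. G n)"
    proof
      fix x assume "x \<in> (\<Union>i\<in>I. S i)"
      then obtain i where i: "i \<in> I" "x \<in> S i" by auto
      then obtain m where m: "x \<in> F i m" using F' by blast
      define k where "k = to_nat_on I i"
      have k: "from_nat_into I k = i" unfolding k_def using i(1) assms(1) by simp
      have "G (prod_encode (k, m)) = F i m" unfolding G_def using k by simp
      then show "x \<in> (\<Union>n. G n)" using m by blast
    qed
    ultimately show ?thesis unfolding meager_in_def by (intro exI[of _ G] conjI)
  qed
qed

lemma meager_subset: "meager_in K S \<Longrightarrow> T \<subseteq> S \<Longrightarrow> meager_in K T"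
  unfolding meager_in_def by blast

lemma not_meager_topspace:
  assumes "topspace K \<noteq> {}" "compact_space K" "metrizable_space K"
  shows "\<not> meager_in K (topspace K)"
proof
  assume "meager_in K (topspace K)"
  then obtain F :: "nat \<Rightarrow> _" where F: "\<And>n. nowhere_dense_in K (F n)" "topspace K \<subseteq> (\<Union>n. F n)"
    unfolding meager_in_def by blast
  have "K interior_of \<Union>(range (\<lambda>n. K closure_of F n)) = {}"
  proof (rule Baire_category_alt)
    show "completely_metrizable_space K \<or> locally_compact_space K \<and> regular_space K"
      using compact_imp_locally_compact_space[OF assms(2)] metrizable_imp_regular_space[OF assms(3)] by (rule disjI2[OF conjI])
    show "countable (range (\<lambda>n. K closure_of F n))" by simp
    fix T assume "T \<in> range (\<lambda>n. K closure_of F n)"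
    then obtain n where n: "T = K closure_of F n" by blast
    show "closedin K T \<and> K interior_of T = {}"
      using F(1)[of n] unfolding nowhere_dense_in_def n by simp
  qed
  moreover have "\<Union>(range (\<lambda>n. K closure_of F n)) = topspace K"
  proof (intro equalityI subsetI)
    fix x assume "x \<in> \<Union>(range (\<lambda>n. K closure_of F n))"
    then obtain n where "x \<in> K closure_of F n" by blast
    then show "x \<in> topspace K" using closure_of_subset_topspace[of K "F n"] by auto
  next
    fix x assume "x \<in> topspace K"
    then obtain n where n: "x \<in> F n" using F(2) by blast
    have "F n \<subseteq> topspace K" using F(1)[of n] unfolding nowhere_dense_in_def by blast
    then have "F n \<subseteq> K closure_of F n" by (rule closure_of_subset)
    then show "x \<in> \<Union>(range (\<lambda>n. K closure_of F n))" using n by blast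
  qed
  ultimately show False using assms(1) by (simp add: interior_of_topspace)
qed




lemma condensation:
  fixes P :: "'a::{metric_space, second_countable_topology} set"
  assumes unc: "uncountable (UNIV::'a set)"
  defines "P \<equiv> {x. \<forall>e>0. uncountable (ball x e)}"
  shows "P \<noteq> {}" and "\<And>x e. x \<in> P \<Longrightarrow> e > 0 \<Longrightarrow> infinite (P \<inter> ball x e)"
proof -
  obtain \<B> :: "'a set set" where B: "countable \<B>" "topological_basis \<B>"
    using ex_countable_basis by blast
  have sub: "UNIV - P \<subseteq> \<Union>{U \<in> \<B>. countable U}"
  proof
    fix x assume "x \<in> UNIV - P"
    then obtain e where e: "e > 0" "countable (ball x e)" unfolding P_def by auto
    obtain V where "V \<in> \<B>" "x \<in> V" "V \<subseteq> ball x e"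
      using topological_basisE[OF B(2), of "ball x e" x] e by auto
    then show "x \<in> \<Union>{U \<in> \<B>. countable U}"
      using e countable_subset by blast
  qed
  have cnt: "countable (UNIV - P)"
  proof (rule countable_subset[OF sub])
    have "countable (\<Union>U\<in>{U \<in> \<B>. countable U}. U)" by (rule countable_UN) (use B(1) in auto)
    then show "countable (\<Union>{U \<in> \<B>. countable U})" by simp
  qed
  show "P \<noteq> {}"
    using cnt unc by auto
  fix x :: 'a and e :: real assume "x \<in> P" "e > 0"
  then have u: "uncountable (ball x e)" unfolding P_def by auto
  show "infinite (P \<inter> ball x e)"
  proof
    assume "finite (P \<inter> ball x e)"
    then have "countable ((P \<inter> ball x e) \<union> (UNIV - P))"
      using cnt by (simp add: countable_finite)
    moreover have "ball x e \<subseteq> (P \<inter> ball x e) \<union> (UNIV - P)" by auto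
    ultimately show False using u countable_subset by blast
  qed
qed

lemma diff_inj_left:
  assumes "inj_on (\<lambda>(i,j). (a i - b j :: 'g::ab_group_add)) (I \<times> J)" "j \<in> J"
  shows "inj_on a I"
  using assms unfolding inj_on_def by (metis SigmaI case_prod_conv prod.inject)

lemma diff_inj_right:
  assumes "inj_on (\<lambda>(i,j). (a i - b j :: 'g::ab_group_add)) (I \<times> J)" "i \<in> I"
  shows "inj_on b J"
  using assms unfolding inj_on_def by (metis SigmaI case_prod_conv prod.inject diff_left_imp_eq)

lemma add_one:
  fixes a b :: "'i \<Rightarrow> 'g::ab_group_add"
  assumes "finite I" "finite J" "inj_on b J" "inj_on (\<lambda>(i,j). a i - b j) (I \<times> J)"
    "infinite Q" "i \<notin> I"
  shows "\<exists>z\<in>Q. inj_on (\<lambda>(i',j). (a(i:=z)) i' - b j) (insert i I \<times> J)"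
proof -
  define Bad where "Bad = (\<lambda>(i',j,j'). a i' - b j' + b j) ` (I \<times> J \<times> J)"
  have "finite Bad" unfolding Bad_def using assms(1,2) by auto
  then obtain z where z: "z \<in> Q" "z \<notin> Bad"
    using assms(5) by (metis Diff_iff finite_subset subsetI)
  have nb: "z \<noteq> a i' - b j' + b j" if "i' \<in> I" "j \<in> J" "j' \<in> J" for i' j j'
    using z(2) that unfolding Bad_def by force
  have "inj_on (\<lambda>(i',j). (a(i:=z)) i' - b j) (insert i I \<times> J)"
  proof (rule inj_onI, clarify)
    fix i1 j1 i2 j2
    assume h: "i1 \<in> insert i I" "j1 \<in> J" "i2 \<in> insert i I" "j2 \<in> J"
      "(a(i := z)) i1 - b j1 = (a(i := z)) i2 - b j2"
    show "i1 = i2 \<and> j1 = j2"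
    proof (cases "i1 = i")
      case True
      show ?thesis
      proof (cases "i2 = i")
        case True
        then have "b j1 = b j2" using h \<open>i1 = i\<close> by simp
        then show ?thesis using assms(3) h True \<open>i1 = i\<close> by (auto dest: inj_onD)
      next
        case False
        then have "i2 \<in> I" using h by auto
        have "z = a i2 - b j2 + b j1" using h True False by (simp add: algebra_simps)
        then show ?thesis using nb[OF \<open>i2 \<in> I\<close> h(2) h(4)] by simp
      qed
    next
      case False
      then have "i1 \<in> I" using h by auto
      show ?thesis
      proof (cases "i2 = i")
        case True
        have "z = a i1 - b j1 + b j2" using h True False by (simp add: algebra_simps)
        then show ?thesis using nb[OF \<open>i1 \<in> I\<close> h(4) h(2)] by simp
      next
        case False2: False
        then have "i2 \<in> I" using h by auto
        have "a i1 - b j1 = a i2 - b j2" using h False False2 by simp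
        then show ?thesis using assms(4) \<open>i1 \<in> I\<close> \<open>i2 \<in> I\<close> h(2,4)
          unfolding inj_on_def by fastforce
      qed
    qed
  qed
  then show ?thesis using z(1) by blast
qed

lemma add_many:
  fixes a b :: "'i \<Rightarrow> 'g::ab_group_add"
  assumes "finite S" "finite I" "finite J" "S \<inter> I = {}" "inj_on b J"
    "inj_on (\<lambda>(i,j). a i - b j) (I \<times> J)" "\<And>i. i \<in> S \<Longrightarrow> infinite (Q i)"
  shows "\<exists>a'. (\<forall>i\<in>I. a' i = a i) \<and> (\<forall>i\<in>S. a' i \<in> Q i) \<and>
             inj_on (\<lambda>(i,j). a' i - b j) ((I \<union> S) \<times> J)"
  using assms
proof (induction S rule: finite_induct)
  case empty
  then show ?case by (intro exI[of _ a]) auto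
next
  case (insert x S)
  then obtain a' where a': "\<forall>i\<in>I. a' i = a i" "\<forall>i\<in>S. a' i \<in> Q i"
      "inj_on (\<lambda>(i,j). a' i - b j) ((I \<union> S) \<times> J)" by auto
  have "x \<notin> I \<union> S" using insert by auto
  then obtain z where z: "z \<in> Q x"
      "inj_on (\<lambda>(i',j). (a'(x:=z)) i' - b j) (insert x (I \<union> S) \<times> J)"
    using add_one[of "I \<union> S" J b a' "Q x" x] insert a' by auto
  show ?case
  proof (intro exI[of _ "a'(x:=z)"] conjI)
    show "\<forall>i\<in>I. (a'(x := z)) i = a i" using a' \<open>x \<notin> I \<union> S\<close> by auto
    show "\<forall>i\<in>insert x S. (a'(x := z)) i \<in> Q i" using a' z \<open>x \<notin> I \<union> S\<close> by auto
    show "inj_on (\<lambda>(i,j). (a'(x := z)) i - b j) ((I \<union> insert x S) \<times> J)"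
      using z(2) by (simp add: Un_insert_right)
  qed
qed

lemma inj_swap:
  fixes f :: "'i \<Rightarrow> 'j \<Rightarrow> 'g::ab_group_add"
  shows "inj_on (\<lambda>(i,j). f i j) (I \<times> J) \<longleftrightarrow> inj_on (\<lambda>(j,i). - f i j) (J \<times> I)"
  unfolding inj_on_def by auto

lemma add_many_B:
  fixes a b :: "'i \<Rightarrow> 'g::ab_group_add"
  assumes "finite T" "finite I" "finite J" "T \<inter> J = {}" "inj_on a I"
    "inj_on (\<lambda>(i,j). a i - b j) (I \<times> J)" "\<And>j. j \<in> T \<Longrightarrow> infinite (Q j)"
  shows "\<exists>b'. (\<forall>j\<in>J. b' j = b j) \<and> (\<forall>j\<in>T. b' j \<in> Q j) \<and>
             inj_on (\<lambda>(i,j). a i - b' j) (I \<times> (J \<union> T))"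
proof -
  have "inj_on (\<lambda>(j,i). b j - a i) (J \<times> I)"
    using assms(6) inj_swap[of "\<lambda>i j. a i - b j" I J] by simp
  then obtain b' where b': "\<forall>j\<in>J. b' j = b j" "\<forall>j\<in>T. b' j \<in> Q j"
      "inj_on (\<lambda>(j,i). b' j - a i) ((J \<union> T) \<times> I)"
    using add_many[of T J I a b Q] assms by auto
  have "inj_on (\<lambda>(i,j). a i - b' j) (I \<times> (J \<union> T))"
    using b'(3) inj_swap[of "\<lambda>i j. a i - b' j" I "J \<union> T"] by simp
  then show ?thesis using b' by blast
qed

lemma finite_min_delta:
  assumes "finite F" "\<And>k. k \<in> F \<Longrightarrow> \<exists>\<delta>>0. R k \<delta>"
    "\<And>k \<delta> \<delta>'. R k \<delta> \<Longrightarrow> 0 < \<delta>' \<Longrightarrow> \<delta>' \<le> \<delta> \<Longrightarrow> R k \<delta>'"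
  shows "\<exists>\<delta>>(0::real). \<forall>k\<in>F. R k \<delta>"
  using assms
proof (induction F rule: finite_induct)
  case empty
  then show ?case by (intro exI[of _ 1]) auto
next
  case (insert x F)
  then obtain d where d: "d > 0" "\<forall>k\<in>F. R k d" by auto
  obtain d' where d': "d' > 0" "R x d'" using insert(4)[of x] by auto
  show ?case
    using d d' insert(5)[of _ d "min d d'"] insert(5)[of x d' "min d d'"]
    by (intro exI[of _ "min d d'"]) auto
qed

lemma sep_single:
  fixes p q p' q' :: "'g::{metric_space, topological_ab_group_add}"
  assumes "p - q \<noteq> p' - q'"
  shows "\<exists>\<delta>>0. \<forall>x y x' y'. dist x p \<le> \<delta> \<longrightarrow> dist y q \<le> \<delta> \<longrightarrow> dist x' p' \<le> \<delta> \<longrightarrow>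
            dist y' q' \<le> \<delta> \<longrightarrow> x - y \<noteq> x' - y'"
proof -
  define r where "r = dist (p - q) (p' - q') / 2"
  have r: "r > 0" using assms unfolding r_def by simp
  have cont: "continuous (at z) (\<lambda>z::'g\<times>'g. fst z - snd z)" for z
    by (intro continuous_intros)
  have ed: "\<exists>\<delta>>0. \<forall>x y. dist x u \<le> \<delta> \<longrightarrow> dist y v \<le> \<delta> \<longrightarrow> dist (x - y) (u - v) < r" for u v :: 'g
  proof -
    obtain d where d: "d > 0" "\<And>z'. dist z' (u,v) < d \<Longrightarrow> dist (fst z' - snd z') (u - v) < r"
      using cont[of "(u,v)"] r unfolding continuous_at_eps_delta by fastforce
    show ?thesis
    proof (intro exI[of _ "d/3"] conjI allI impI)
      show "d/3 > 0" using d by simp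
      fix x y assume h: "dist x u \<le> d/3" "dist y v \<le> d/3"
      have "dist (x,y) (u,v) = sqrt ((dist x u)\<^sup>2 + (dist y v)\<^sup>2)"
        by (simp add: dist_Pair_Pair)
      also have "\<dots> \<le> \<bar>dist x u\<bar> + \<bar>dist y v\<bar>" by (rule sqrt_sum_squares_le_sum_abs)
      also have "\<dots> < d" using h d by simp
      finally show "dist (x - y) (u - v) < r" using d(2)[of "(x,y)"] by simp
    qed
  qed
  obtain d1 where d1: "d1 > 0" "\<forall>x y. dist x p \<le> d1 \<longrightarrow> dist y q \<le> d1 \<longrightarrow> dist (x - y) (p - q) < r"
    using ed by blast
  obtain d2 where d2: "d2 > 0" "\<forall>x y. dist x p' \<le> d2 \<longrightarrow> dist y q' \<le> d2 \<longrightarrow> dist (x - y) (p' - q') < r"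
    using ed by blast
  show ?thesis
  proof (intro exI[of _ "min d1 d2"] conjI allI impI)
    show "min d1 d2 > 0" using d1 d2 by simp
    fix x y x' y'
    assume h: "dist x p \<le> min d1 d2" "dist y q \<le> min d1 d2" "dist x' p' \<le> min d1 d2" "dist y' q' \<le> min d1 d2"
    have 1: "dist (x - y) (p - q) < r" using d1 h by auto
    have 2: "dist (x' - y') (p' - q') < r" using d2 h by auto
    show "x - y \<noteq> x' - y'"
    proof
      assume "x - y = x' - y'"
      then have "dist (p - q) (p' - q') < 2 * r"
        using 1 2 dist_triangle3[of "p - q" "p' - q'" "x - y"] by simp
      then show False unfolding r_def by simp
    qed
  qed
qed

lemma separation:
  fixes a b :: "'i \<Rightarrow> 'g::{metric_space, topological_ab_group_add}"
  assumes "finite I" "finite J" "inj_on (\<lambda>(i,j). a i - b j) (I \<times> J)"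
  shows "\<exists>\<delta>>0. \<forall>i\<in>I. \<forall>j\<in>J. \<forall>i'\<in>I. \<forall>j'\<in>J. (i,j) \<noteq> (i',j') \<longrightarrow>
     (\<forall>x y x' y'. dist x (a i) \<le> \<delta> \<longrightarrow> dist y (b j) \<le> \<delta> \<longrightarrow> dist x' (a i') \<le> \<delta> \<longrightarrow>
            dist y' (b j') \<le> \<delta> \<longrightarrow> x - y \<noteq> x' - y')"
proof -
  define F where "F = {(k, k'). k \<in> I \<times> J \<and> k' \<in> I \<times> J \<and> k \<noteq> k'}"
  define R where "R = (\<lambda>((i,j),(i',j')) \<delta>. \<forall>x y x' y'. dist x (a i) \<le> \<delta> \<longrightarrow> dist y (b j) \<le> \<delta> \<longrightarrow>
      dist x' (a i') \<le> \<delta> \<longrightarrow> dist y' (b j') \<le> (\<delta>::real) \<longrightarrow> x - y \<noteq> x' - y')"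
  have "finite F" unfolding F_def
    by (rule finite_subset[of _ "(I \<times> J) \<times> (I \<times> J)"]) (use assms in auto)
  moreover have "\<exists>\<delta>>0. R k \<delta>" if "k \<in> F" for k
  proof -
    obtain i j i' j' where k0: "k = ((i,j),(i',j'))" by (metis prod.exhaust)
    then have k: "k = ((i,j),(i',j'))" "(i,j) \<in> I \<times> J" "(i',j') \<in> I \<times> J" "(i,j) \<noteq> (i',j')"
      using that unfolding F_def by auto
    have "a i - b j \<noteq> a i' - b j'"
      using assms(3) k unfolding inj_on_def by fastforce
    then show ?thesis using sep_single[of "a i" "b j" "a i'" "b j'"] k unfolding R_def by simp
  qed
  moreover have "R k \<delta>'" if "R k \<delta>" "0 < \<delta>'" "\<delta>' \<le> \<delta>" for k \<delta> \<delta>'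
    using that unfolding R_def by (auto split: prod.splits)
  ultimately obtain \<delta> where "\<delta> > 0" "\<forall>k\<in>F. R k \<delta>"
    using finite_min_delta[of F R] by blast
  then show ?thesis unfolding F_def R_def by (intro exI[of _ \<delta>]) fastforce
qed




definition perf :: "'a::metric_space set \<Rightarrow> bool" where
  "perf S \<longleftrightarrow> (\<forall>a\<in>S. \<forall>e>0. \<exists>x\<in>S. x \<noteq> a \<and> dist x a < e)"

lemma Pow_lessThan_Suc: "Pow {..<Suc n} = Pow {..<n} \<union> insert n ` Pow {..<n}"
  by (simp add: lessThan_Suc Pow_insert)

lemma tree_set:
  fixes c :: "nat \<Rightarrow> nat set \<Rightarrow> 'a::complete_space" and \<rho> :: "nat \<Rightarrow> real"
  assumes h1: "\<And>n. 0 < \<rho> n \<and> \<rho> n \<le> (1/2)^n"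
    and h2: "\<And>n s. s \<in> Pow {..<n} \<Longrightarrow> c (Suc n) s = c n s"
    and h3: "\<And>n s. s \<in> Pow {..<Suc n} \<Longrightarrow> dist (c (Suc n) s) (c n (s \<inter> {..<n})) \<le> \<rho> n / 2"
    and h4: "\<And>n. \<rho> (Suc n) \<le> \<rho> n / 2"
    and h5: "\<And>n s s' x. s \<in> Pow {..<n} \<Longrightarrow> s' \<in> Pow {..<n} \<Longrightarrow> s \<noteq> s' \<Longrightarrow>
               dist x (c n s) \<le> \<rho> n \<Longrightarrow> dist x (c n s') \<le> \<rho> n \<Longrightarrow> False"
  defines "T \<equiv> (\<Inter>n. \<Union>s\<in>Pow {..<n}. cball (c n s) (\<rho> n))"
  shows "compact T" "T \<noteq> {}" "perf T"
proof -
  have memT: "x \<in> T \<longleftrightarrow> (\<forall>n. \<exists>s\<in>Pow {..<n}. dist x (c n s) \<le> \<rho> n)" for x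
    unfolding T_def by (auto simp: dist_commute)
  have agree: "m \<le> n \<Longrightarrow> s \<in> Pow {..<m} \<Longrightarrow> c n s = c m s" for m n s
  proof (induction n rule: dec_induct)
    case base then show ?case by simp
  next
    case (step n)
    then have "s \<in> Pow {..<n}" by auto
    then show ?case using h2 step by simp
  qed
  have nest: "\<forall>s\<in>Pow {..<n}. \<forall>x. dist x (c n s) \<le> \<rho> n \<longrightarrow> dist x (c m (s \<inter> {..<m})) \<le> \<rho> m"
    if "m \<le> n" for m n
    using that
  proof (induction n rule: dec_induct)
    case base
    then show ?case by (auto simp: Int_absorb2)
  next
    case (step n)
    show ?case
    proof (intro ballI allI impI)
      fix s x assume s: "s \<in> Pow {..<Suc n}" and d: "dist x (c (Suc n) s) \<le> \<rho> (Suc n)"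
      have "dist x (c n (s \<inter> {..<n})) \<le> dist x (c (Suc n) s) + dist (c (Suc n) s) (c n (s \<inter> {..<n}))"
        by (rule dist_triangle)
      also have "\<dots> \<le> \<rho> n" using d h3[OF s] h4[of n] by simp
      finally have "dist x (c m ((s \<inter> {..<n}) \<inter> {..<m})) \<le> \<rho> m"
        using step.IH by auto
      moreover have "(s \<inter> {..<n}) \<inter> {..<m} = s \<inter> {..<m}" using step.hyps by auto
      ultimately show "dist x (c m (s \<inter> {..<m})) \<le> \<rho> m" by simp
    qed
  qed
  have inT: "c m s \<in> T" if "s \<in> Pow {..<m}" for m s
    unfolding memT
  proof
    fix n
    show "\<exists>s'\<in>Pow {..<n}. dist (c m s) (c n s') \<le> \<rho> n"
    proof (cases "m \<le> n")
      case True
      then show ?thesis using agree[OF True that] that h1[of n] by (intro bexI[of _ s]) auto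
    next
      case False
      then have "dist (c m s) (c n (s \<inter> {..<n})) \<le> \<rho> n"
        using nest[of n m] that h1[of m] by auto
      then show ?thesis by (intro bexI[of _ "s \<inter> {..<n}"]) auto
    qed
  qed
  show "T \<noteq> {}" using inT[of "{}" 0] by auto
  show "compact T"
    unfolding compact_eq_totally_bounded
  proof
    have "closed T" unfolding T_def
      by (intro closed_INT ballI closed_UN) auto
    then show "complete T" by (simp add: complete_eq_closed)
    show "\<forall>e>0. \<exists>k. finite k \<and> T \<subseteq> (\<Union>x\<in>k. ball x e)"
    proof (intro allI impI)
      fix e :: real assume e: "e > 0"
      obtain n where n: "(1/2::real)^n < e" using real_arch_pow_inv[of e "1/2"] e by auto
      have "T \<subseteq> (\<Union>x\<in>c n ` Pow {..<n}. ball x e)"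
      proof
        fix x assume "x \<in> T"
        then obtain s where "s \<in> Pow {..<n}" "dist x (c n s) \<le> \<rho> n" unfolding memT by blast
        then show "x \<in> (\<Union>x\<in>c n ` Pow {..<n}. ball x e)"
          using h1[of n] n by (auto simp: dist_commute intro!: bexI[of _ s])
      qed
      then show "\<exists>k. finite k \<and> T \<subseteq> (\<Union>x\<in>k. ball x e)" by (intro exI[of _ "c n ` Pow {..<n}"]) auto
    qed
  qed
  show "perf T" unfolding perf_def
  proof (intro ballI allI impI)
    fix a and e :: real assume a: "a \<in> T" and e: "e > 0"
    obtain n where n: "(1/2::real)^n < e/2" using real_arch_pow_inv[of "e/2" "1/2"] e by auto
    obtain s1 where s1: "s1 \<in> Pow {..<Suc n}" "dist a (c (Suc n) s1) \<le> \<rho> (Suc n)"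
      using a unfolding memT by blast
    define s where "s = s1 \<inter> {..<n}"
    define s2 where "s2 = (if n \<in> s1 then s else insert n s)"
    have s2: "s2 \<in> Pow {..<Suc n}" "s2 \<noteq> s1" "s2 \<inter> {..<n} = s"
      using s1(1) unfolding s2_def s_def by auto
    have xT: "c (Suc n) s2 \<in> T" using inT[OF s2(1)] .
    have ne: "c (Suc n) s2 \<noteq> a"
    proof
      assume "c (Suc n) s2 = a"
      then show False using h5[OF s2(1) s1(1) s2(2), of a] s1(2) h1[of "Suc n"] by simp
    qed
    have d1: "dist (c (Suc n) s2) (c n s) \<le> \<rho> n / 2" using h3[OF s2(1)] s2(3) by simp
    have d2: "dist a (c n s) \<le> \<rho> n" using nest[of n "Suc n"] s1 unfolding s_def by auto
    have "dist (c (Suc n) s2) a \<le> dist (c (Suc n) s2) (c n s) + dist a (c n s)"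
      by (rule dist_triangle2)
    also have "\<dots> < e" using d1 d2 h1[of n] n by simp
    finally show "\<exists>x\<in>T. x \<noteq> a \<and> dist x a < e" using xT ne by blast
  qed
qed




definition sepc :: "nat \<Rightarrow> (nat set \<Rightarrow> 'g::{metric_space,ab_group_add}) \<Rightarrow> (nat set \<Rightarrow> 'g) \<Rightarrow> real \<Rightarrow> bool" where
  "sepc n pa pb \<rho> \<longleftrightarrow> (\<forall>s\<in>Pow {..<n}. \<forall>t\<in>Pow {..<n}. \<forall>s'\<in>Pow {..<n}. \<forall>t'\<in>Pow {..<n}. (s,t) \<noteq> (s',t') \<longrightarrow>
     (\<forall>x y x' y'. dist x (pa s) \<le> \<rho> \<longrightarrow> dist y (pb t) \<le> \<rho> \<longrightarrow> dist x' (pa s') \<le> \<rho> \<longrightarrow>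
            dist y' (pb t') \<le> \<rho> \<longrightarrow> x - y \<noteq> x' - y'))"

lemma sepD:
  assumes "sepc n pa pb \<rho>" "s \<in> Pow {..<n}" "t \<in> Pow {..<n}" "s' \<in> Pow {..<n}" "t' \<in> Pow {..<n}"
    "(s,t) \<noteq> (s',t')" "dist x (pa s) \<le> \<rho>" "dist y (pb t) \<le> \<rho>" "dist x' (pa s') \<le> \<rho>"
    "dist y' (pb t') \<le> \<rho>" "x - y = x' - y'"
  shows False
  using assms unfolding sepc_def by blast

lemma sepI:
  assumes "\<And>s t s' t' x y x' y'. s \<in> Pow {..<n} \<Longrightarrow> t \<in> Pow {..<n} \<Longrightarrow> s' \<in> Pow {..<n} \<Longrightarrow> t' \<in> Pow {..<n} \<Longrightarrow>
    (s,t) \<noteq> (s',t') \<Longrightarrow> dist x (pa s) \<le> \<rho> \<Longrightarrow> dist y (pb t) \<le> \<rho> \<Longrightarrow> dist x' (pa s') \<le> \<rho> \<Longrightarrow>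
    dist y' (pb t') \<le> \<rho> \<Longrightarrow> x - y = x' - y' \<Longrightarrow> False"
  shows "sepc n pa pb \<rho>"
  using assms unfolding sepc_def by blast

lemma core:
  assumes unc: "uncountable (UNIV :: 'g :: {polish_space, topological_ab_group_add} set)"
  shows "\<exists>A B :: 'g set. compact A \<and> A \<noteq> {} \<and> perf A \<and> compact B \<and> B \<noteq> {} \<and> perf B \<and>
     (\<forall>x\<in>A. \<forall>x'\<in>A. \<forall>y\<in>B. \<forall>y'\<in>B. x - y = x' - y' \<longrightarrow> x = x' \<and> y = y')"
proof -
  define P where "P = {x::'g. \<forall>e>0. uncountable (ball x e)}"
  have Pne: "P \<noteq> {}" and Pinf: "\<And>x e. x \<in> P \<Longrightarrow> e > 0 \<Longrightarrow> infinite (P \<inter> ball x e)"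
    using condensation[OF unc] unfolding P_def by auto
  define Sep where "Sep = (sepc :: nat \<Rightarrow> (nat set \<Rightarrow> 'g) \<Rightarrow> (nat set \<Rightarrow> 'g) \<Rightarrow> real \<Rightarrow> bool)"
  define Good where "Good = (\<lambda>n (st :: (nat set \<Rightarrow> 'g) \<times> (nat set \<Rightarrow> 'g) \<times> real).
     0 < snd (snd st) \<and> snd (snd st) \<le> (1/2)^n \<and>
     (\<forall>s\<in>Pow {..<n}. fst st s \<in> P \<and> fst (snd st) s \<in> P) \<and> Sep n (fst st) (fst (snd st)) (snd (snd st)))"
  define Step where "Step = (\<lambda>n (st :: (nat set \<Rightarrow> 'g) \<times> (nat set \<Rightarrow> 'g) \<times> real) st'.
     (\<forall>s\<in>Pow {..<n}. fst st' s = fst st s \<and> fst (snd st') s = fst (snd st) s) \<and>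
     snd (snd st') \<le> snd (snd st) / 2 \<and>
     (\<forall>s\<in>Pow {..<Suc n}. dist (fst st' s) (fst st (s \<inter> {..<n})) \<le> snd (snd st) / 2 \<and>
        dist (fst (snd st') s) (fst (snd st) (s \<inter> {..<n})) \<le> snd (snd st) / 2))"
  have sep_inj: "inj_on (\<lambda>(s,t). pa s - pb t) (Pow {..<n} \<times> Pow {..<n})" if "Sep n pa pb \<rho>" "\<rho> > 0"
    for n pa pb \<rho>
  proof (rule inj_onI)
    fix p q assume pq: "p \<in> Pow {..<n} \<times> Pow {..<n}" "q \<in> Pow {..<n} \<times> Pow {..<n}"
      "(\<lambda>(s,t). pa s - pb t) p = (\<lambda>(s,t). pa s - pb t) q"
    obtain s t where p: "p = (s,t)" by fastforce
    obtain s' t' where q: "q = (s',t')" by fastforce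
    have h: "s \<in> Pow {..<n}" "t \<in> Pow {..<n}" "s' \<in> Pow {..<n}" "t' \<in> Pow {..<n}"
      "pa s - pb t = pa s' - pb t'" using pq unfolding p q by auto
    show "p = q"
    proof (rule ccontr)
      assume "p \<noteq> q"
      then show False
        using sepD[where x="pa s" and y="pb t" and x'="pa s'" and y'="pb t'", OF that(1)[unfolded Sep_def] h(1-4)] h(5) that(2) p q by auto
    qed
  qed
  have init: "\<exists>st. Good 0 st"
  proof -
    obtain p0 where "p0 \<in> P" using Pne by auto
    moreover have "Sep 0 (\<lambda>_. p0) (\<lambda>_. p0) 1" unfolding Sep_def by (rule sepI) auto
    ultimately show ?thesis unfolding Good_def
      by (intro exI[of _ "(\<lambda>_. p0, \<lambda>_. p0, 1)"]) auto
  qed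
  have step: "\<exists>st'. Good (Suc n) st' \<and> Step n st st'" if g: "Good n st" for n st
  proof -
    obtain pa pb \<rho> where st: "st = (pa, pb, \<rho>)" by (metis prod.exhaust)
    have \<rho>: "0 < \<rho>" "\<rho> \<le> (1/2)^n" and inP: "\<forall>s\<in>Pow {..<n}. pa s \<in> P \<and> pb s \<in> P"
      and sep: "Sep n pa pb \<rho>" using g unfolding Good_def st by auto
    define I where "I = Pow {..<n}"
    define S where "S = insert n ` I"
    have finI: "finite I" "finite S" unfolding I_def S_def by auto
    have SI: "S \<inter> I = {}" unfolding S_def I_def by auto
    have PS: "Pow {..<Suc n} = I \<union> S" unfolding I_def S_def by (rule Pow_lessThan_Suc)
    have emp: "{} \<in> I" unfolding I_def by auto
    have Sm: "i - {n} \<in> I" if "i \<in> S" for i using that unfolding S_def I_def by auto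
    have Scap: "i \<inter> {..<n} = i - {n}" if "i \<in> S" for i using that unfolding S_def I_def by auto
    have Icap: "i \<inter> {..<n} = i" if "i \<in> I" for i using that unfolding I_def by auto
    have inj0: "inj_on (\<lambda>(s,t). pa s - pb t) (I \<times> I)" using sep_inj[OF sep \<rho>(1)] unfolding I_def .
    have injb: "inj_on pb I" using diff_inj_right[OF inj0 emp] .
    define QA where "QA i = P \<inter> ball (pa (i - {n})) (\<rho>/2)" for i
    define QB where "QB i = P \<inter> ball (pb (i - {n})) (\<rho>/2)" for i
    have "infinite (QA i)" if "i \<in> S" for i
      unfolding QA_def using Pinf inP Sm[OF that] \<rho>(1) unfolding I_def by auto
    then obtain pa' where pa': "\<forall>i\<in>I. pa' i = pa i" "\<forall>i\<in>S. pa' i \<in> QA i"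
      "inj_on (\<lambda>(i,j). pa' i - pb j) ((I \<union> S) \<times> I)"
      using add_many[of S I I pb pa QA] finI SI injb inj0 by blast
    have inja: "inj_on pa' (I \<union> S)" using diff_inj_left[OF pa'(3) emp] .
    have "infinite (QB i)" if "i \<in> S" for i
      unfolding QB_def using Pinf inP Sm[OF that] \<rho>(1) unfolding I_def by auto
    then obtain pb' where pb': "\<forall>j\<in>I. pb' j = pb j" "\<forall>j\<in>S. pb' j \<in> QB j"
      "inj_on (\<lambda>(i,j). pa' i - pb' j) ((I \<union> S) \<times> (I \<union> S))"
      using add_many_B[of S "I \<union> S" I pa' pb QB] finI SI inja pa'(3) by blast
    obtain \<delta> where \<delta>: "\<delta> > 0" "\<forall>i\<in>I \<union> S. \<forall>j\<in>I \<union> S. \<forall>i'\<in>I \<union> S. \<forall>j'\<in>I \<union> S. (i,j) \<noteq> (i',j') \<longrightarrow>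
     (\<forall>x y x' y'. dist x (pa' i) \<le> \<delta> \<longrightarrow> dist y (pb' j) \<le> \<delta> \<longrightarrow> dist x' (pa' i') \<le> \<delta> \<longrightarrow>
            dist y' (pb' j') \<le> \<delta> \<longrightarrow> x - y \<noteq> x' - y')"
      using separation[OF _ _ pb'(3)] finI by blast
    define \<rho>' where "\<rho>' = min \<delta> (\<rho>/2)"
    have \<rho>': "0 < \<rho>'" "\<rho>' \<le> \<rho>/2" "\<rho>' \<le> \<delta>" unfolding \<rho>'_def using \<delta> \<rho> by auto
    have good: "Good (Suc n) (pa', pb', \<rho>')"
      unfolding Good_def
    proof (simp only: fst_conv snd_conv, intro conjI)
      show "0 < \<rho>'" by fact
      show "\<rho>' \<le> (1/2)^Suc n" using \<rho>' \<rho> by simp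
      show "\<forall>s\<in>Pow {..<Suc n}. pa' s \<in> P \<and> pb' s \<in> P"
        unfolding PS using pa' pb' inP unfolding QA_def QB_def I_def by auto
      show "Sep (Suc n) pa' pb' \<rho>'"
        unfolding Sep_def
      proof (rule sepI)
        fix s t s' t' x y x' y'
        assume m: "s \<in> Pow {..<Suc n}" "t \<in> Pow {..<Suc n}" "s' \<in> Pow {..<Suc n}" "t' \<in> Pow {..<Suc n}" "(s,t) \<noteq> (s',t')"
          and d: "dist x (pa' s) \<le> \<rho>'" "dist y (pb' t) \<le> \<rho>'" "dist x' (pa' s') \<le> \<rho>'" "dist y' (pb' t') \<le> \<rho>'"
          and e: "x - y = x' - y'"
        have m': "s \<in> I \<union> S" "t \<in> I \<union> S" "s' \<in> I \<union> S" "t' \<in> I \<union> S" using m(1-4) unfolding PS by auto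
        have "\<forall>x y x' y'. dist x (pa' s) \<le> \<delta> \<longrightarrow> dist y (pb' t) \<le> \<delta> \<longrightarrow> dist x' (pa' s') \<le> \<delta> \<longrightarrow>
            dist y' (pb' t') \<le> \<delta> \<longrightarrow> x - y \<noteq> x' - y'"
          using \<delta>(2) m' m(5) by blast
        moreover have "dist x (pa' s) \<le> \<delta>" "dist y (pb' t) \<le> \<delta>" "dist x' (pa' s') \<le> \<delta>" "dist y' (pb' t') \<le> \<delta>"
          using d \<rho>'(3) by linarith+
        ultimately show False using e by blast
      qed
    qed
    have a1: "\<forall>s\<in>Pow {..<n}. pa' s = pa s \<and> pb' s = pb s" using pa'(1) pb'(1) unfolding I_def by auto
    have a3: "\<forall>s\<in>Pow {..<Suc n}. dist (pa' s) (pa (s \<inter> {..<n})) \<le> \<rho> / 2 \<and> dist (pb' s) (pb (s \<inter> {..<n})) \<le> \<rho> / 2"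
    proof
      fix s assume "s \<in> Pow {..<Suc n}"
      then have "s \<in> I \<or> s \<in> S" unfolding PS by auto
      then show "dist (pa' s) (pa (s \<inter> {..<n})) \<le> \<rho> / 2 \<and> dist (pb' s) (pb (s \<inter> {..<n})) \<le> \<rho> / 2"
      proof
        assume "s \<in> I"
        then show ?thesis using pa'(1) pb'(1) Icap \<rho> by auto
      next
        assume "s \<in> S"
        then show ?thesis using pa'(2) pb'(2) Scap[of s] unfolding QA_def QB_def
          by (auto simp: dist_commute less_eq_real_def)
      qed
    qed
    have stp: "Step n st (pa', pb', \<rho>')"
      unfolding Step_def st fst_conv snd_conv using a1 a3 \<rho>'(2) by blast
    show ?thesis using good stp by blast
  qed
  obtain f where f: "\<forall>n. Good n (f n) \<and> Step n (f n) (f (Suc n))"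
    using dependent_nat_choice[of Good Step] init step by blast
  define pa where "pa n = fst (f n)" for n
  define pb where "pb n = fst (snd (f n))" for n
  define \<rho> where "\<rho> n = snd (snd (f n))" for n
  have G: "0 < \<rho> n" "\<rho> n \<le> (1/2)^n" "Sep n (pa n) (pb n) (\<rho> n)" for n
    using f unfolding Good_def pa_def pb_def \<rho>_def by auto
  have St: "\<And>s. s \<in> Pow {..<n} \<Longrightarrow> pa (Suc n) s = pa n s \<and> pb (Suc n) s = pb n s"
    "\<rho> (Suc n) \<le> \<rho> n / 2"
    "\<And>s. s \<in> Pow {..<Suc n} \<Longrightarrow> dist (pa (Suc n) s) (pa n (s \<inter> {..<n})) \<le> \<rho> n / 2 \<and>
        dist (pb (Suc n) s) (pb n (s \<inter> {..<n})) \<le> \<rho> n / 2" for n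
    using f unfolding Step_def pa_def pb_def \<rho>_def by auto
  define A where "A = (\<Inter>n. \<Union>s\<in>Pow {..<n}. cball (pa n s) (\<rho> n))"
  define B where "B = (\<Inter>n. \<Union>s\<in>Pow {..<n}. cball (pb n s) (\<rho> n))"
  have discA: False if "s \<in> Pow {..<n}" "s' \<in> Pow {..<n}" "s \<noteq> s'"
      "dist x (pa n s) \<le> \<rho> n" "dist x (pa n s') \<le> \<rho> n" for n s s' x
  proof -
    show False
      using sepD[where x=x and y="pb n {}" and x'=x and y'="pb n {}" and t="{}" and t'="{}", OF G(3)[of n, unfolded Sep_def] that(1) _ that(2)]
        that(3-5) G(1)[of n] by auto
  qed
  have discB: False if "s \<in> Pow {..<n}" "s' \<in> Pow {..<n}" "s \<noteq> s'"
      "dist x (pb n s) \<le> \<rho> n" "dist x (pb n s') \<le> \<rho> n" for n s s' x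
  proof -
    show False
      using sepD[where x="pa n {}" and y=x and x'="pa n {}" and y'=x and s="{}" and s'="{}", OF G(3)[of n, unfolded Sep_def] _ that(1) _ that(2)]
        that(3-5) G(1)[of n] by auto
  qed
  have h1: "\<And>n. 0 < \<rho> n \<and> \<rho> n \<le> (1/2)^n" using G by auto
  have h2a: "\<And>n s. s \<in> Pow {..<n} \<Longrightarrow> pa (Suc n) s = pa n s" using St(1) by blast
  have h2b: "\<And>n s. s \<in> Pow {..<n} \<Longrightarrow> pb (Suc n) s = pb n s" using St(1) by blast
  have h3a: "\<And>n s. s \<in> Pow {..<Suc n} \<Longrightarrow> dist (pa (Suc n) s) (pa n (s \<inter> {..<n})) \<le> \<rho> n / 2"
    using St(3) by blast
  have h3b: "\<And>n s. s \<in> Pow {..<Suc n} \<Longrightarrow> dist (pb (Suc n) s) (pb n (s \<inter> {..<n})) \<le> \<rho> n / 2"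
    using St(3) by blast
  have A: "compact A" "A \<noteq> {}" "perf A"
    unfolding A_def by (rule tree_set[of \<rho> pa, OF h1 h2a h3a St(2) discA]; assumption)+
  have B: "compact B" "B \<noteq> {}" "perf B"
    unfolding B_def by (rule tree_set[of \<rho> pb, OF h1 h2b h3b St(2) discB]; assumption)+
  have indep: "x = x' \<and> y = y'" if h: "x \<in> A" "x' \<in> A" "y \<in> B" "y' \<in> B" "x - y = x' - y'" for x x' y y'
  proof (rule ccontr)
    assume "\<not> (x = x' \<and> y = y')"
    then have pos: "0 < dist x x' + dist y y'" by (auto simp: add_pos_nonneg add_nonneg_pos)
    obtain n where n: "(1/2::real)^n < (dist x x' + dist y y') / 4"
      using real_arch_pow_inv[of "(dist x x' + dist y y')/4" "1/2"] pos by auto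
    obtain s where s: "s \<in> Pow {..<n}" "dist (pa n s) x \<le> \<rho> n" using h(1) unfolding A_def by auto
    obtain s' where s': "s' \<in> Pow {..<n}" "dist (pa n s') x' \<le> \<rho> n" using h(2) unfolding A_def by auto
    obtain t where t: "t \<in> Pow {..<n}" "dist (pb n t) y \<le> \<rho> n" using h(3) unfolding B_def by auto
    obtain t' where t': "t' \<in> Pow {..<n}" "dist (pb n t') y' \<le> \<rho> n" using h(4) unfolding B_def by auto
    have "(s,t) \<noteq> (s',t')"
    proof
      assume "(s,t) = (s',t')"
      then have "dist x x' \<le> 2 * \<rho> n" "dist y y' \<le> 2 * \<rho> n"
        using s s' t t' dist_triangle3[of x x' "pa n s"] dist_triangle3[of y y' "pb n t"] by auto
      then show False using n G(2)[of n] by simp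
    qed
    then show False
      using sepD[where x=x and y=y and x'=x' and y'=y', OF G(3)[of n, unfolded Sep_def] s(1) t(1) s'(1) t'(1)] s t s' t' h(5)
      by (simp add: dist_commute)
  qed
  show ?thesis using A B indep by blast
qed





lemma inj_real: "\<exists>\<iota>::'g::{metric_space, second_countable_topology} \<Rightarrow> real. inj \<iota>"
proof -
  obtain \<B> :: "'g set set" where B: "countable \<B>" "topological_basis \<B>"
    using ex_countable_basis by blast
  define \<phi> where "\<phi> x = {n. x \<in> from_nat_into \<B> n}" for x
  have "inj \<phi>"
  proof (rule injI, rule ccontr)
    fix x y assume eq: "\<phi> x = \<phi> y" and ne: "x \<noteq> y"
    have "open (- {y})" by (simp add: open_Compl)
    then obtain V where V: "V \<in> \<B>" "x \<in> V" "V \<subseteq> - {y}"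
      using topological_basisE[OF B(2), of "- {y}" x] ne by auto
    define n where "n = to_nat_on \<B> V"
    have "from_nat_into \<B> n = V" unfolding n_def using B(1) V(1) by simp
    then have "n \<in> \<phi> x" "n \<notin> \<phi> y" using V unfolding \<phi>_def by auto
    then show False using eq by simp
  qed
  obtain g :: "nat set \<Rightarrow> real" where g: "bij_betw g UNIV UNIV"
    using nat_sets_eqpoll_reals unfolding eqpoll_def by blast
  have "inj (g \<circ> \<phi>)" using \<open>inj \<phi>\<close> g by (simp add: bij_betw_def inj_compose)
  then show ?thesis by blast
qed

context includes cardinal_syntax
begin

lemma CH_enum:
  assumes CH: "continuum_hypothesis"
    and unc: "uncountable (UNIV :: 'g :: {metric_space, second_countable_topology} set)"
  shows "\<exists>(e::real \<Rightarrow> 'g) (r::real rel). surj e \<and> Well_order r \<and> Field r = UNIV \<and>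
            (\<forall>a. countable (underS r a))"
proof -
  obtain \<iota> :: "'g \<Rightarrow> real" where inj: "inj \<iota>" using inj_real by blast
  have "uncountable (range \<iota>)" using unc inj countable_image_inj_on by blast
  then have "range \<iota> \<approx> (UNIV::real set)" using CH unfolding continuum_hypothesis_def by blast
  then obtain f where f: "bij_betw f (range \<iota>) (UNIV::real set)" unfolding eqpoll_def by blast
  define e where "e = inv \<iota> \<circ> inv_into (range \<iota>) f"
  have "surj e"
  proof -
    have "e (f (\<iota> z)) = z" for z
      unfolding e_def using bij_betw_inv_into_left[OF f, of "\<iota> z"] inj by simp
    then show ?thesis by (intro surjI[of e "\<lambda>z. f (\<iota> z)"]) simp
  qed
  define r where "r = |UNIV::real set|"
  have "countable (underS r a)" for a
  proof (rule ccontr)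
    assume "uncountable (underS r a)"
    then have "underS r a \<approx> (UNIV::real set)" using CH unfolding continuum_hypothesis_def by blast
    then have "\<exists>f. bij_betw f (underS r a) (UNIV::real set)" unfolding eqpoll_def .
    then have "|underS r a| =o |UNIV::real set|" by (simp only: card_of_ordIso)
    then have "|underS r a| =o r" by (simp only: r_def)
    moreover have "|underS r a| <o r"
      unfolding r_def by (rule card_of_underS[OF card_of_Card_order]) (simp add: Field_card_of)
    ultimately show False using not_ordLess_ordIso by blast
  qed
  then have c: "\<forall>a. countable (underS r a)" by blast
  have w: "Well_order r" unfolding r_def by (rule card_of_Well_order)
  have fr: "Field r = UNIV" unfolding r_def by (rule Field_card_of)
  show ?thesis by (intro exI[of _ e] exI[of _ r] conjI \<open>surj e\<close> w fr c)
qed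

end

lemma countable_meager:
  assumes "countable D" "\<And>k. k \<in> D \<Longrightarrow> nowhere_dense_in K {k}"
  shows "meager_in K D"
proof -
  have "meager_in K (\<Union>k\<in>D. {k})"
  proof (rule meager_countable_union[OF assms(1)])
    fix k assume "k \<in> D"
    then show "meager_in K {k}" unfolding meager_in_def
      by (intro exI[of _ "\<lambda>n::nat. {k}"]) (use assms(2) in auto)
  qed
  then show ?thesis by simp
qed

lemma transport:
  fixes A Y :: "'g::{polish_space, topological_ab_group_add} set"
  assumes cA: "compact A" and neA: "A \<noteq> {}" and pA: "perf A"
    and cnt: "\<And>c. countable {x\<in>A. x - c \<in> Y}"
  shows "naively_haar_meager Y"
proof -
  obtain \<iota> :: "'g \<Rightarrow> real" where inj: "inj \<iota>" using inj_real by blast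
  define j where "j = inv \<iota>"
  have j\<iota>[simp]: "j (\<iota> x) = x" for x unfolding j_def using inj by simp
  define K where "K = pullback_topology (\<iota> ` A) j (subtopology euclidean A)"
  have topK: "topspace K = \<iota> ` A"
    unfolding K_def topspace_pullback_topology by auto
  have contK: "continuous_map K (subtopology euclidean A) j"
    using continuous_map_pullback[OF continuous_map_id, of "\<iota> ` A" j "subtopology euclidean A"]
    unfolding K_def by (simp add: o_def)
  have openm: "open_map K (subtopology euclidean A) j"
    unfolding open_map_def
  proof (intro allI impI)
    fix U assume "openin K U"
    then obtain V where V: "openin (subtopology euclidean A) V" "U = j -` V \<inter> \<iota> ` A"
      unfolding K_def openin_pullback_topology by blast
    have "V \<subseteq> A" using openin_subset[OF V(1)] by simp
    have "j ` U = V" unfolding V(2)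
    proof (intro equalityI subsetI)
      fix v assume "v \<in> j ` (j -` V \<inter> \<iota> ` A)"
      then show "v \<in> V" by blast
    next
      fix v assume v: "v \<in> V"
      then have "\<iota> v \<in> j -` V \<inter> \<iota> ` A" using \<open>V \<subseteq> A\<close> by auto
      then have "j (\<iota> v) \<in> j ` (j -` V \<inter> \<iota> ` A)" by (rule imageI)
      then show "v \<in> j ` (j -` V \<inter> \<iota> ` A)" by simp
    qed
    then show "openin (subtopology euclidean A) (j ` U)" using V(1) by simp
  qed
  have hom: "homeomorphic_map K (subtopology euclidean A) j"
  proof (rule bijective_open_imp_homeomorphic_map[OF contK openm])
    show "j ` topspace K = topspace (subtopology euclidean A)" unfolding topK by (simp add: image_image)
    show "inj_on j (topspace K)" unfolding topK by (auto simp: inj_on_def)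
  qed
  then have hs: "K homeomorphic_space (subtopology euclidean A)"
    using homeomorphic_space hom by blast
  have compK: "compact_space K"
    using homeomorphic_compact_space[OF hs] compact_space_subtopology[of euclidean A] cA by simp
  have metK: "metrizable_space K"
    using homeomorphic_metrizable_space[OF hs] metrizable_space_subtopology[OF metrizable_space_euclidean] by simp
  have contE: "continuous_map K euclidean j"
    using contK continuous_map_in_subtopology by blast
  have t1: "t1_space K" by (rule metrizable_imp_t1_space[OF metK])
  have nd: "nowhere_dense_in K {k}" if k: "k \<in> topspace K" for k
  proof -
    have "closedin K {k}" using t1 k unfolding t1_space_closedin_singleton by blast
    then have cl: "K closure_of {k} = {k}" by (simp add: closure_of_closedin)
    have jkA: "j k \<in> A" using k topK by auto
    have "\<not> openin K {k}"
    proof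
      assume o: "openin K {k}"
      have "openin (subtopology euclidean A) (j ` {k})"
        using homeomorphic_map_openness[OF hom, of "{k}"] k o by simp
      then have "openin (subtopology euclidean A) {j k}" by simp
      then obtain T where T: "openin euclidean T" "{j k} = T \<inter> A"
        unfolding openin_subtopology by blast
      have oT: "open T" using T(1) by simp
      have jkT: "j k \<in> T" using T(2) by blast
      obtain \<epsilon> where \<epsilon>: "\<epsilon> > 0" "ball (j k) \<epsilon> \<subseteq> T"
        using oT jkT open_contains_ball by blast
      obtain x where x: "x \<in> A" "x \<noteq> j k" "dist x (j k) < \<epsilon>"
        using pA \<epsilon>(1) jkA unfolding perf_def by blast
      have "x \<in> ball (j k) \<epsilon>" using x(3) by (simp add: dist_commute)
      then have "x \<in> T \<inter> A" using \<epsilon>(2) x(1) by blast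
      then have "x = j k" using T(2) by blast
      then show False using x(2) by simp
    qed
    have "K interior_of {k} = {}"
    proof (rule ccontr)
      assume "K interior_of {k} \<noteq> {}"
      then have "K interior_of {k} = {k}" using interior_of_subset[of K "{k}"] by blast
      then have "openin K {k}" by (metis openin_interior_of)
      then show False using \<open>\<not> openin K {k}\<close> by simp
    qed
    then show ?thesis unfolding nowhere_dense_in_def using cl k by simp
  qed
  show ?thesis
    unfolding naively_haar_meager_def
  proof (intro exI conjI allI)
    show "topspace K \<noteq> {}" using topK neA by simp
    show "compact_space K" by fact
    show "metrizable_space K" by fact
    show "continuous_map K euclidean j" by fact
    fix g h :: 'g
    have sub: "{k \<in> topspace K. j k \<in> {g + x + h |x. x \<in> Y}} \<subseteq> \<iota> ` {x\<in>A. x - (g + h) \<in> Y}"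
    proof
      fix k assume "k \<in> {k \<in> topspace K. j k \<in> {g + x + h |x. x \<in> Y}}"
      then obtain a x where "a \<in> A" "k = \<iota> a" "x \<in> Y" "a = g + x + h" using topK by auto
      then show "k \<in> \<iota> ` {x\<in>A. x - (g + h) \<in> Y}" by (auto simp: algebra_simps)
    qed
    show "meager_in K {k \<in> topspace K. j k \<in> {g + x + h |x. x \<in> Y}}"
    proof (rule countable_meager)
      show "countable {k \<in> topspace K. j k \<in> {g + x + h |x. x \<in> Y}}"
      proof (rule countable_subset[OF sub])
        show "countable (\<iota> ` {x\<in>A. x - (g + h) \<in> Y})" using cnt[of "g + h"] by (rule countable_image)
      qed
      show "nowhere_dense_in K {k}" if "k \<in> {k \<in> topspace K. j k \<in> {g + x + h |x. x \<in> Y}}" for k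
        using nd[of k] that by simp
    qed
  qed
qed




lemma subsingleton_countable: "(\<And>x y. x \<in> S \<Longrightarrow> y \<in> S \<Longrightarrow> x = y) \<Longrightarrow> countable S"
  by (metis countable_empty countable_insert subsetI insertCI countable_subset all_not_in_conv)

theorem proposition3p6:
  assumes CH: "continuum_hypothesis"
    and uncountable: "uncountable (UNIV :: 'g :: {polish_space, topological_ab_group_add} set)"
  shows "\<exists>X :: 'g set. naively_haar_meager X \<and> naively_haar_meager (UNIV - X)
            \<and> \<not> naively_haar_meager (X \<union> (UNIV - X))"
proof -
  obtain A B :: "'g set" where AB: "compact A" "A \<noteq> {}" "perf A" "compact B" "B \<noteq> {}" "perf B"
    and ind: "\<And>x x' y y'. x \<in> A \<Longrightarrow> x' \<in> A \<Longrightarrow> y \<in> B \<Longrightarrow> y' \<in> B \<Longrightarrow> x - y = x' - y' \<Longrightarrow> x = x' \<and> y = y'"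
    using core[OF uncountable] by blast
  obtain e :: "real \<Rightarrow> 'g" and r :: "real rel" where er: "surj e" "Well_order r" "Field r = UNIV"
    "\<And>a. countable (underS r a)"
    using CH_enum[OF CH uncountable] by blast
  have tot: "(a, b) \<in> r \<or> (b, a) \<in> r" if "a \<noteq> b" for a b
    using er(2,3) that unfolding well_order_on_def linear_order_on_def total_on_def by auto
  define X where "X = (\<Union>a. (\<lambda>y. y + e a) ` B - (\<Union>b\<in>underS r a. (\<lambda>x. x + e b) ` A))"
  have c1: "countable {x\<in>A. x - c \<in> X}" for c
  proof -
    obtain a0 where a0: "e a0 = - c" using er(1) by (metis surjD)
    have "{x\<in>A. x - c \<in> X} \<subseteq> (\<Union>a\<in>insert a0 (underS r a0). {x\<in>A. x - c \<in> (\<lambda>y. y + e a) ` B})"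
    proof
      fix x assume "x \<in> {x\<in>A. x - c \<in> X}"
      then obtain a where x: "x \<in> A" "x - c \<in> (\<lambda>y. y + e a) ` B"
        "x - c \<notin> (\<Union>b\<in>underS r a. (\<lambda>x. x + e b) ` A)" unfolding X_def by blast
      have "a \<in> insert a0 (underS r a0)"
      proof (rule ccontr)
        assume "a \<notin> insert a0 (underS r a0)"
        then have "a0 \<in> underS r a" using tot[of a a0] unfolding underS_def by auto
        moreover have "x - c \<in> (\<lambda>x. x + e a0) ` A" using x(1) a0 by (auto simp: image_iff)
        ultimately show False using x(3) by blast
      qed
      then show "x \<in> (\<Union>a\<in>insert a0 (underS r a0). {x\<in>A. x - c \<in> (\<lambda>y. y + e a) ` B})"
        using x by blast
    qed
    moreover have "countable (\<Union>a\<in>insert a0 (underS r a0). {x\<in>A. x - c \<in> (\<lambda>y. y + e a) ` B})"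
    proof (rule countable_UN)
      show "countable (insert a0 (underS r a0))" using er(4) by simp
      fix a
      show "countable {x\<in>A. x - c \<in> (\<lambda>y. y + e a) ` B}"
      proof (rule subsingleton_countable)
        fix x x' assume "x \<in> {x\<in>A. x - c \<in> (\<lambda>y. y + e a) ` B}" "x' \<in> {x\<in>A. x - c \<in> (\<lambda>y. y + e a) ` B}"
        then obtain y y' where "x \<in> A" "x' \<in> A" "y \<in> B" "y' \<in> B" "x - c = y + e a" "x' - c = y' + e a"
          by blast
        then have "x = y + e a + c" "x' = y' + e a + c" by (simp_all add: diff_eq_eq)
        then have "x - y = x' - y'" by simp
        then show "x = x'" using ind[of x x' y y'] \<open>x \<in> A\<close> \<open>x' \<in> A\<close> \<open>y \<in> B\<close> \<open>y' \<in> B\<close> by blast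
      qed
    qed
    ultimately show ?thesis using countable_subset by blast
  qed
  have c2: "countable {y\<in>B. y - c \<in> UNIV - X}" for c
  proof -
    obtain a0 where a0: "e a0 = - c" using er(1) by (metis surjD)
    have "{y\<in>B. y - c \<in> UNIV - X} \<subseteq> (\<Union>b\<in>underS r a0. {y\<in>B. y - c \<in> (\<lambda>x. x + e b) ` A})"
    proof
      fix y assume y: "y \<in> {y\<in>B. y - c \<in> UNIV - X}"
      have "y - c \<in> (\<lambda>y. y + e a0) ` B" using y a0 by (auto simp: image_iff)
      then have "y - c \<in> (\<Union>b\<in>underS r a0. (\<lambda>x. x + e b) ` A)"
        using y unfolding X_def by blast
      then show "y \<in> (\<Union>b\<in>underS r a0. {y\<in>B. y - c \<in> (\<lambda>x. x + e b) ` A})" using y by blast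
    qed
    moreover have "countable (\<Union>b\<in>underS r a0. {y\<in>B. y - c \<in> (\<lambda>x. x + e b) ` A})"
    proof (rule countable_UN)
      show "countable (underS r a0)" using er(4) by simp
      fix b
      show "countable {y\<in>B. y - c \<in> (\<lambda>x. x + e b) ` A}"
      proof (rule subsingleton_countable)
        fix y y' assume "y \<in> {y\<in>B. y - c \<in> (\<lambda>x. x + e b) ` A}" "y' \<in> {y\<in>B. y - c \<in> (\<lambda>x. x + e b) ` A}"
        then obtain x x' where "y \<in> B" "y' \<in> B" "x \<in> A" "x' \<in> A" "y - c = x + e b" "y' - c = x' + e b"
          by blast
        then have "y = x + e b + c" "y' = x' + e b + c" by (simp_all add: diff_eq_eq)
        then have "x - y = x' - y'" by simp
        then show "y = y'" using ind[of x x' y y'] \<open>x \<in> A\<close> \<open>x' \<in> A\<close> \<open>y \<in> B\<close> \<open>y' \<in> B\<close> by blast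
      qed
    qed
    ultimately show ?thesis using countable_subset by blast
  qed
  have "naively_haar_meager X" by (rule transport[OF AB(1-3) c1])
  moreover have "naively_haar_meager (UNIV - X)" by (rule transport[OF AB(4-6) c2])
  moreover have "\<not> naively_haar_meager (X \<union> (UNIV - X))"
  proof
    assume "naively_haar_meager (X \<union> (UNIV - X))"
    then obtain K :: "real topology" and f :: "real \<Rightarrow> 'g" where K: "topspace K \<noteq> {}" "compact_space K"
      "metrizable_space K" and m: "meager_in K {k \<in> topspace K. f k \<in> {0 + x + 0 | x. x \<in> X \<union> (UNIV - X)}}"
      unfolding naively_haar_meager_def by blast
    have "{k \<in> topspace K. f k \<in> {0 + x + 0 | x. x \<in> X \<union> (UNIV - X)}} = topspace K" by auto
    then show False using m not_meager_topspace[OF K] by simp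
  qed
  ultimately show ?thesis by blast
qed


end
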